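(* Let $s<\infty$ and let $f_1,\dots,f_s:[0,1]\to\mathbb{R}$ each satisfy (i) monotonicity ($x_1\ge x_2\Rightarrow f(x_1)\ge f(x_2)$), (ii) concavity ($f(\sum_i p_ix_i)\ge\sum_i p_if(x_i)$ for probability weights $p_i$), and (iii) normalization ($f(0)=0$, $f(1)=1$). For $k=1,\dots,s$ let $E_k$ be the entanglement measure on pure two-qubit states given by $E_k(|\psi\rangle)=f_k(x(|\psi\rangle))$, extended to ensembles by $E_k(\{p_i,|\psi_i\rangle\})=\sum_i p_iE_k(|\psi_i\rangle)$. Then there exist pure two-qubit states $|\psi_1\rangle,|\psi_2\rangle,|\phi\rangle$ and $p_1\in(0,1)$, $p_2=1-p_1$, such that, with $D_1=\{(p_1,|\psi_1\rangle),(p_2,|\psi_2\rangle)\}$ and $D_2=\{(1,|\phi\rangle)\}$, $$E_k(D_1)\ge E_k(D_2)\quad\text{for all }k=1,\dots,s,$$ and yet the transformation $D_1\to D_2$ cannot be realized by LOCC with certainty.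
   Context: For a pure two-qubit state $|\psi\rangle=\sqrt{\lambda_0}|00\rangle+\sqrt{\lambda_1}|11\rangle$ (Schmidt form, $\lambda_0+\lambda_1=1$), set $x(|\psi\rangle)=2\min\{\lambda_0,\lambda_1\}\in[0,1]$. A probability distribution (ensemble) of pure bipartite states is $D=\{(p_i,|\psi_i\rangle)\}_{i=1}^n$, meaning the two parties share $|\psi_i\rangle$ with probability $p_i$ and both know the index $i$. A transformation $D_1=\{(p_i,|\psi_i\rangle)\}_{i=1}^{n_1}\to D_2=\{(q_j,|\phi_j\rangle)\}_{j=1}^{n_2}$ is realizable by LOCC (with certainty) if there exist conditional probabilities $q_{j|i}\ge0$ with $\sum_j q_{j|i}=1$ and $q_j=\sum_i p_iq_{j|i}$, such that for each $i$ there is an LOCC protocol (local operations and classical communication) that transforms $|\psi_i\rangle$ into the ensemble $\{(q_{j|i},|\phi_j\rangle)\}_j$, i.e. outputs $|\phi_j\rangle$ with probability $q_{j|i}$. *)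

theory Defs
  imports "HOL-Analysis.Analysis"
begin

text \<open>Two-qubit pure states as coefficient functions: v a b is the amplitude of |a b>,
  with False = |0>, True = |1>.  First index: Alice's qubit; second: Bob's qubit.
  Vectors need not be normalised (unnormalised branch states in protocols).\<close>
type_synonym qstate = "bool \<Rightarrow> bool \<Rightarrow> complex"
type_synonym qop = "bool \<Rightarrow> bool \<Rightarrow> complex"   \<comment> \<open>2x2 matrix, M i j\<close>

definition sqnorm :: "qstate \<Rightarrow> real" where
  "sqnorm v = (\<Sum>a\<in>UNIV. \<Sum>b\<in>UNIV. (cmod (v a b))^2)"

definition is_pure_state :: "qstate \<Rightarrow> bool" where
  "is_pure_state v \<longleftrightarrow> sqnorm v = 1"

definition schmidt_state :: "real \<Rightarrow> qstate" where
  "schmidt_state l0 = (\<lambda>a b. if a = b then (if a then complex_of_real (sqrt (1 - l0))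
                                               else complex_of_real (sqrt l0)) else 0)"

text \<open>x(|psi>) = 2 min(l0, l1) for a Schmidt-form state with coefficients l0, l1 = 1 - l0.\<close>
definition xval :: "real \<Rightarrow> real" where
  "xval l0 = 2 * min l0 (1 - l0)"

definition applyA :: "qop \<Rightarrow> qstate \<Rightarrow> qstate" where
  "applyA M v = (\<lambda>a b. \<Sum>a'\<in>UNIV. M a a' * v a' b)"

definition applyB :: "qop \<Rightarrow> qstate \<Rightarrow> qstate" where
  "applyB M v = (\<lambda>a b. \<Sum>b'\<in>UNIV. M b b' * v a b')"

definition kraus_complete :: "qop list \<Rightarrow> bool" where
  "kraus_complete Ms \<longleftrightarrow> (\<forall>i j. (\<Sum>M\<leftarrow>Ms. \<Sum>c\<in>UNIV. cnj (M c i) * M c j) = (if i = j then 1 else 0))"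

text \<open>Finite-round LOCC protocols: a tree; at each internal node one party performs a
  measurement (list of Kraus operators, each with a continuation protocol, outcome broadcast),
  at each leaf the parties declare an output label j.  Fine-grained (pure) Kraus operators
  suffice since the desired outputs are pure; local unitaries are one-outcome measurements.\<close>
datatype protocol = Leaf nat | MeasA "(qop \<times> protocol) list" | MeasB "(qop \<times> protocol) list"

fun valid_protocol :: "protocol \<Rightarrow> bool" where
  "valid_protocol (Leaf j) = True"
| "valid_protocol (MeasA l) = (kraus_complete (map fst l) \<and> (\<forall>x\<in>set l. valid_protocol (snd x)))"
| "valid_protocol (MeasB l) = (kraus_complete (map fst l) \<and> (\<forall>x\<in>set l. valid_protocol (snd x)))"

fun outprob :: "protocol \<Rightarrow> qstate \<Rightarrow> nat \<Rightarrow> real" where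
  "outprob (Leaf j) v k = (if j = k then sqnorm v else 0)"
| "outprob (MeasA l) v k = sum_list (map (\<lambda>x. outprob (snd x) (applyA (fst x) v) k) l)"
| "outprob (MeasB l) v k = sum_list (map (\<lambda>x. outprob (snd x) (applyB (fst x) v) k) l)"

text \<open>At every leaf labelled j the (unnormalised) post-measurement state is a multiple of
  the target phi j, i.e. equal to phi j as a physical state (or the branch has probability 0).\<close>
fun leaves_ok :: "(nat \<Rightarrow> qstate) \<Rightarrow> protocol \<Rightarrow> qstate \<Rightarrow> bool" where
  "leaves_ok phi (Leaf j) v = (\<exists>c::complex. v = (\<lambda>a b. c * phi j a b))"
| "leaves_ok phi (MeasA l) v = (\<forall>x\<in>set l. leaves_ok phi (snd x) (applyA (fst x) v))"
| "leaves_ok phi (MeasB l) v = (\<forall>x\<in>set l. leaves_ok phi (snd x) (applyB (fst x) v))"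

type_synonym ensemble = "(real \<times> qstate) list"

definition locc_pure_to_ens :: "qstate \<Rightarrow> ensemble \<Rightarrow> bool" where
  "locc_pure_to_ens psi E \<longleftrightarrow> (\<exists>P. valid_protocol P \<and> leaves_ok (\<lambda>j. snd (E ! j)) P psi \<and>
      (\<forall>j. outprob P psi j = (if j < length E then fst (E ! j) else 0)))"

definition locc_ens_trans :: "ensemble \<Rightarrow> ensemble \<Rightarrow> bool" where
  "locc_ens_trans D1 D2 \<longleftrightarrow> (\<exists>q :: nat \<Rightarrow> nat \<Rightarrow> real.
      (\<forall>i<length D1. \<forall>j<length D2. q i j \<ge> 0) \<and>
      (\<forall>i<length D1. (\<Sum>j<length D2. q i j) = 1) \<and>
      (\<forall>j<length D2. fst (D2 ! j) = (\<Sum>i<length D1. fst (D1 ! i) * q i j)) \<and>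
      (\<forall>i<length D1. locc_pure_to_ens (snd (D1 ! i)) (map (\<lambda>j. (q i j, snd (D2 ! j))) [0..<length D2])))"

end

theory Submission
  imports Defs
begin

definition detq :: "qstate \<Rightarrow> complex" where
  "detq v = v False False * v True True - v False True * v True False"

lemma s2: "(\<Sum>x\<in>UNIV. g x) = g False + (g True :: 'a::comm_monoid_add)"
  by (simp add: UNIV_bool)

lemma detq_applyA: "detq (applyA M v) = detq M * detq v"
  unfolding detq_def applyA_def unfolding s2 by (simp add: algebra_simps)

lemma detq_applyB: "detq (applyB M v) = detq M * detq v"
  unfolding detq_def applyB_def unfolding s2 by (simp add: algebra_simps)

lemma aux2: "2 * (a::real) * b \<le> x \<Longrightarrow> 2 * c * d \<le> y \<Longrightarrow> a * b + c * d \<le> x/2 + y/2"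
  by linarith

lemma cmod_detq_le: "cmod (detq M) \<le> (\<Sum>c\<in>UNIV. \<Sum>i\<in>UNIV. (cmod (M c i))^2) / 2"
proof -
  have "cmod (detq M) \<le> cmod (M False False * M True True) + cmod (M False True * M True False)"
    unfolding detq_def by (rule norm_triangle_ineq4)
  also have "\<dots> = cmod (M False False) * cmod (M True True) + cmod (M False True) * cmod (M True False)"
    by (simp add: norm_mult)
  also have "\<dots> \<le> ((cmod (M False False))^2 + (cmod (M True True))^2)/2 + ((cmod (M False True))^2 + (cmod (M True False))^2)/2"
    by (rule aux2[OF sum_squares_bound sum_squares_bound])
  finally have h: "cmod (detq M) \<le> ((cmod (M False False))^2 + (cmod (M True True))^2)/2 + ((cmod (M False True))^2 + (cmod (M True False))^2)/2" .
  show ?thesis using h unfolding s2 by (simp add: field_simps)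
qed

lemma cm: "cmod z * cmod z = Re z * Re z + Im z * Im z"
  using cmod_power2[of z] by (simp add: power2_eq_square)

lemma kraus_sum: "(\<Sum>M\<leftarrow>(Ms::qop list). \<Sum>c\<in>UNIV. \<Sum>i\<in>UNIV. (cmod (M c i))^2) = (\<Sum>i\<in>UNIV. Re (\<Sum>M\<leftarrow>Ms. \<Sum>c\<in>UNIV. cnj (M c i) * M c i))"
proof (induction Ms)
  case Nil then show ?case by simp
next
  case (Cons M Ms)
  show ?case using Cons unfolding s2 by (simp add: cm power2_eq_square)
qed

lemma kraus_det_le:
  assumes "kraus_complete Ms"
  shows "(\<Sum>M\<leftarrow>Ms. cmod (detq M)) \<le> 1"
proof -
  have "(\<Sum>M\<leftarrow>Ms. cmod (detq M)) \<le> (\<Sum>M\<leftarrow>Ms. (\<Sum>c\<in>UNIV. \<Sum>i\<in>UNIV. (cmod (M c i))^2) / 2)"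
    by (rule sum_list_mono) (rule cmod_detq_le)
  also have "\<dots> = (\<Sum>M\<leftarrow>Ms. \<Sum>c\<in>UNIV. \<Sum>i\<in>UNIV. (cmod (M c i))^2) / 2"
    by (induction Ms) (simp_all add: add_divide_distrib)
  also have "\<dots> = 1"
    using assms unfolding kraus_sum kraus_complete_def by (simp add: s2)
  finally show ?thesis .
qed

lemma sqnorm_smult: "sqnorm (\<lambda>a b. c * phi a b) = (cmod c)^2 * sqnorm phi"
  unfolding sqnorm_def by (simp add: norm_mult power_mult_distrib sum_distrib_left)

lemma monotone_det:
  assumes "valid_protocol P" "leaves_ok phi P v" "sqnorm (phi 0) = 1"
  shows "outprob P v 0 * cmod (detq (phi 0)) \<le> cmod (detq v)"
  using assms
proof (induction P arbitrary: v)
  case (Leaf j)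
  show ?case
  proof (cases "j = 0")
    case True
    then obtain c where c: "v = (\<lambda>a b. c * phi 0 a b)" using Leaf by auto
    have "detq v = c^2 * detq (phi 0)" unfolding c detq_def by (simp add: algebra_simps power2_eq_square)
    then show ?thesis using True c Leaf.prems(3) by (simp add: sqnorm_smult norm_mult norm_power)
  qed simp
next
  case (MeasA l)
  have "outprob (MeasA l) v 0 * cmod (detq (phi 0)) = (\<Sum>x\<leftarrow>l. outprob (snd x) (applyA (fst x) v) 0 * cmod (detq (phi 0)))"
    by (simp add: sum_list_mult_const)
  also have "\<dots> \<le> (\<Sum>x\<leftarrow>l. cmod (detq (applyA (fst x) v)))"
  proof (rule sum_list_mono)
    fix x assume x: "x \<in> set l"
    obtain M Q where xMQ: "x = (M, Q)" by (cases x)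
    have sn: "Q \<in> Basic_BNFs.snds x" using xMQ by simp
    have v1: "valid_protocol Q" using MeasA.prems(1) x xMQ by fastforce
    have v2: "leaves_ok phi Q (applyA M v)" using MeasA.prems(2) x xMQ by fastforce
    from MeasA.IH[OF x sn v1 v2 MeasA.prems(3)] xMQ
    show "outprob (snd x) (applyA (fst x) v) 0 * cmod (detq (phi 0)) \<le> cmod (detq (applyA (fst x) v))"
      by simp
  qed
  also have "\<dots> = (\<Sum>x\<leftarrow>l. cmod (detq (fst x))) * cmod (detq v)"
    by (simp add: detq_applyA norm_mult sum_list_mult_const)
  also have "\<dots> \<le> 1 * cmod (detq v)"
  proof (rule mult_right_mono)
    have "kraus_complete (map fst l)" using MeasA by simp
    from kraus_det_le[OF this] show "(\<Sum>x\<leftarrow>l. cmod (detq (fst x))) \<le> 1" by (simp add: comp_def)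
  qed simp
  finally show ?case by simp
next
  case (MeasB l)
  have "outprob (MeasB l) v 0 * cmod (detq (phi 0)) = (\<Sum>x\<leftarrow>l. outprob (snd x) (applyB (fst x) v) 0 * cmod (detq (phi 0)))"
    by (simp add: sum_list_mult_const)
  also have "\<dots> \<le> (\<Sum>x\<leftarrow>l. cmod (detq (applyB (fst x) v)))"
  proof (rule sum_list_mono)
    fix x assume x: "x \<in> set l"
    obtain M Q where xMQ: "x = (M, Q)" by (cases x)
    have sn: "Q \<in> Basic_BNFs.snds x" using xMQ by simp
    have v1: "valid_protocol Q" using MeasB.prems(1) x xMQ by fastforce
    have v2: "leaves_ok phi Q (applyB M v)" using MeasB.prems(2) x xMQ by fastforce
    from MeasB.IH[OF x sn v1 v2 MeasB.prems(3)] xMQ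
    show "outprob (snd x) (applyB (fst x) v) 0 * cmod (detq (phi 0)) \<le> cmod (detq (applyB (fst x) v))"
      by simp
  qed
  also have "\<dots> = (\<Sum>x\<leftarrow>l. cmod (detq (fst x))) * cmod (detq v)"
    by (simp add: detq_applyB norm_mult sum_list_mult_const)
  also have "\<dots> \<le> 1 * cmod (detq v)"
  proof (rule mult_right_mono)
    have "kraus_complete (map fst l)" using MeasB by simp
    from kraus_det_le[OF this] show "(\<Sum>x\<leftarrow>l. cmod (detq (fst x))) \<le> 1" by (simp add: comp_def)
  qed simp
  finally show ?case by simp
qed


lemma detq_schmidt: "detq (schmidt_state a) = complex_of_real (sqrt a * sqrt (1 - a))"
  unfolding detq_def schmidt_state_def by simp

lemma sqnorm_schmidt: "a \<in> {0..1} \<Longrightarrow> sqnorm (schmidt_state a) = 1"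
  unfolding sqnorm_def schmidt_state_def s2 by simp

lemma no_locc:
  assumes a: "0 \<le> a" "a < b" "b \<le> 1/2"
  shows "\<not> locc_ens_trans [(p1, schmidt_state a), (p2, schmidt_state a2)] [(1, schmidt_state b)]"
proof
  assume "locc_ens_trans [(p1, schmidt_state a), (p2, schmidt_state a2)] [(1, schmidt_state b)]"
  then obtain q where q1: "(\<Sum>j<1. q 0 j) = 1"
     and l: "locc_pure_to_ens (schmidt_state a) (map (\<lambda>j. (q 0 j, snd ([(1::real, schmidt_state b)] ! j))) [0..<1])"
    unfolding locc_ens_trans_def by fastforce
  have "q 0 0 = 1" using q1 by simp
  then have "locc_pure_to_ens (schmidt_state a) [(1, schmidt_state b)]" using l by simp
  then obtain P where P: "valid_protocol P" "leaves_ok (\<lambda>j. snd ([(1::real, schmidt_state b)] ! j)) P (schmidt_state a)"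
     "outprob P (schmidt_state a) 0 = 1"
    unfolding locc_pure_to_ens_def by fastforce
  have "sqnorm ((\<lambda>j. snd ([(1::real, schmidt_state b)] ! j)) 0) = 1"
    using a by (simp add: sqnorm_schmidt)
  from monotone_det[OF P(1,2) this] P(3)
  have "cmod (detq (schmidt_state b)) \<le> cmod (detq (schmidt_state a))" by simp
  then have "sqrt b * sqrt (1 - b) \<le> sqrt a * sqrt (1 - a)"
    using a by (simp add: detq_schmidt norm_mult)
  then have "sqrt (b * (1 - b)) \<le> sqrt (a * (1 - a))" by (simp add: real_sqrt_mult)
  then have "b * (1 - b) \<le> a * (1 - a)" by simp
  moreover have "a * (1 - a) < b * (1 - b)"
  proof -
    have "b * (1 - b) - a * (1 - a) = (b - a) * (1 - b - a)" by algebra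
    moreover have "(b - a) * (1 - b - a) > 0" using a by simp
    ultimately show ?thesis by simp
  qed
  ultimately show False by simp
qed

theorem proposition1:
  fixes s :: nat and f :: "nat \<Rightarrow> real \<Rightarrow> real"
  assumes mono: "\<And>k x1 x2. k \<in> {1..s} \<Longrightarrow> x1 \<in> {0..1} \<Longrightarrow> x2 \<in> {0..1} \<Longrightarrow> x1 \<ge> x2 \<Longrightarrow> f k x1 \<ge> f k x2"
      and conc: "\<And>k. k \<in> {1..s} \<Longrightarrow> concave_on {0..1} (f k)"
      and norm0: "\<And>k. k \<in> {1..s} \<Longrightarrow> f k 0 = 0"
      and norm1: "\<And>k. k \<in> {1..s} \<Longrightarrow> f k 1 = 1"
  shows "\<exists>a1 a2 b p1. a1 \<in> {0..1} \<and> a2 \<in> {0..1} \<and> b \<in> {0..1} \<and> 0 < p1 \<and> p1 < 1 \<and>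
           (\<forall>k\<in>{1..s}. p1 * f k (xval a1) + (1 - p1) * f k (xval a2) \<ge> 1 * f k (xval b)) \<and>
           \<not> locc_ens_trans [(p1, schmidt_state a1), (1 - p1, schmidt_state a2)] [(1, schmidt_state b)]"
proof -
  define bad where "bad k j \<longleftrightarrow> f k (1/2^j) = 1 \<and> f k (1/2^(j+1)) < 1" for k j :: nat
  have uniq: "j1 = j2" if k: "k \<in> {1..s}" and b1: "bad k j1" and b2: "bad k j2" for k j1 j2
  proof (rule ccontr)
    have gen: False if "bad k i1" "bad k i2" "i1 < i2" for i1 i2
    proof -
      have "(2::real)^(i1+1) \<le> 2^i2"
        by (rule power_increasing) (use that(3) in auto)
      then have "(1::real)/2^i2 \<le> 1/2^(i1+1)"
      proof (intro divide_left_mono)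
        have "(1::real) \<le> 2^i1" by (rule one_le_power) simp
        then show "0 < (2::real)^i2 * 2^(i1+1)" by simp
      qed (use \<open>(2::real)^(i1+1) \<le> 2^i2\<close> in auto)
      moreover have h1: "(1::real) \<le> 2^(i1+1)" "(1::real) \<le> 2^i2" by (rule one_le_power, simp)+
      moreover have "(1::real)/2^i2 \<in> {0..1}" "(1::real)/2^(i1+1) \<in> {0..1}" using h1 by auto
      ultimately have "f k (1/2^i2) \<le> f k (1/2^(i1+1))" using mono[OF k] by blast
      then show False using that unfolding bad_def by simp
    qed
    assume "j1 \<noteq> j2"
    then show False using gen b1 b2 by (meson linorder_neqE_nat)
  qed
  define g where "g k = (SOME j. bad k j)" for k
  define B where "B = {j\<in>{0..s}. \<exists>k\<in>{1..s}. bad k j}"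
  have "B \<subseteq> g ` {1..s}"
  proof
    fix j assume "j \<in> B"
    then obtain k where k: "k \<in> {1..s}" "bad k j" unfolding B_def by blast
    then have "bad k (g k)" unfolding g_def by (meson someI)
    with k have "j = g k" using uniq by blast
    then show "j \<in> g ` {1..s}" using k by blast
  qed
  then have "card B \<le> card (g ` {1..s})" by (rule card_mono[rotated]) simp
  also have "\<dots> \<le> card {1..s}" by (rule card_image_le) simp
  finally have cB: "card B \<le> s" by simp
  have "{0..s} - B \<noteq> {}"
  proof
    assume "{0..s} - B = {}"
    then have "{0..s} \<subseteq> B" by blast
    then have "card {0..s} \<le> card B" by (rule card_mono[rotated]) (simp add: B_def)
    then show False using cB by simp
  qed
  then obtain j where j: "j \<in> {0..s}" "\<And>k. k \<in> {1..s} \<Longrightarrow> \<not> bad k j"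
    unfolding B_def by blast
  define xb :: real where "xb = 1/2^j"
  define t :: real where "t = 1/2^(j+1)"
  have t: "0 < t" "t < xb" "xb \<le> 1" "t = xb / 2" unfolding t_def xb_def by (auto simp: divide_simps)
  define S where "S = insert (1/2) ((\<lambda>k. 1 - f k xb) ` {k\<in>{1..s}. f k xb < 1})"
  define p where "p = Min S"
  have finS: "finite S" "S \<noteq> {}" unfolding S_def by auto
  have p_pos: "0 < p" unfolding p_def using finS by (subst Min_gr_iff) (auto simp: S_def)
  have "1/2 \<in> S" unfolding S_def by simp
  then have p_half: "p \<le> 1/2" unfolding p_def by (rule Min_le[OF finS(1)])
  have p_le: "p \<le> 1 - f k xb" if "k \<in> {1..s}" "f k xb < 1" for k
  proof -
    have "1 - f k xb \<in> S" unfolding S_def using that by blast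
    then show ?thesis unfolding p_def by (rule Min_le[OF finS(1)])
  qed
  have xv1: "xval (t/2) = t" using t(1-3) unfolding xval_def by simp
  have xv2: "xval (1/2) = 1" unfolding xval_def by simp
  have xv3: "xval (xb/2) = xb" using t(1-3) unfolding xval_def by simp
  have ineq: "p * f k (xval (t/2)) + (1 - p) * f k (xval (1/2)) \<ge> 1 * f k (xval (xb/2))"
    if k: "k \<in> {1..s}" for k
  proof -
    have tt: "0 < t" "t < xb" "xb \<le> 1" using t(1-3) .
    have "f k 0 \<le> f k t" by (rule mono[OF k]) (use tt in auto)
    then have f0: "f k t \<ge> 0" using norm0[OF k] by simp
    have "f k xb \<le> f k 1" by (rule mono[OF k]) (use tt in auto)
    then have f1: "f k xb \<le> 1" using norm1[OF k] by simp
    have f2: "f k t \<le> f k xb" by (rule mono[OF k]) (use tt in auto)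
    have nb: "\<not> bad k j" using j k by blast
    show ?thesis
    proof (cases "f k xb < 1")
      case True
      have "p \<le> 1 - f k xb" using p_le[OF k True] .
      moreover have "p * f k t \<ge> 0" using f0 p_pos by simp
      ultimately show ?thesis using xv1 xv2 xv3 norm1[OF k] by simp
    next
      case False
      then have "f k xb = 1" using f1 by simp
      then have "f k t = 1" using nb f2 unfolding bad_def xb_def t_def by simp
      then show ?thesis using xv1 xv2 xv3 norm1[OF k] \<open>f k xb = 1\<close> by simp
    qed
  qed
  have nl: "\<not> locc_ens_trans [(p, schmidt_state (t/2)), (1 - p, schmidt_state (1/2))] [(1, schmidt_state (xb/2))]"
    by (rule no_locc) (use t(1-3) in auto)
  have ineqA: "\<forall>k\<in>{1..s}. p * f k (xval (t/2)) + (1 - p) * f k (xval (1/2)) \<ge> 1 * f k (xval (xb/2))"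
    using ineq by blast
  have c1: "t/2 \<in> {0..1}" using t(1-3) by simp
  have c2: "(1/2::real) \<in> {0..1}" by simp
  have c3: "xb/2 \<in> {0..1}" using t(1-3) by simp
  have p1: "p < 1" using p_half by simp
  show ?thesis
    apply (rule exI[of _ "t/2"], rule exI[of _ "1/2"], rule exI[of _ "xb/2"], rule exI[of _ p])
    using c1 c2 c3 p_pos p1 ineqA nl by blast
qed

end
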